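(* Let $X=\{0,1,2,3\}$ and let $a,b,c$ be the transformations of $X^\ast$ defined recursively (with $\emptyset\mapsto\emptyset$) by $a(0w)=1\,a(w)$, $a(1w)=0w$, $a(2w)=2w$, $a(3w)=3w$; $b(0w)=2\,b(w)$, $b(2w)=0w$, $b(1w)=1w$, $b(3w)=3w$; $c(0w)=3\,c(w)$, $c(3w)=0w$, $c(1w)=1w$, $c(2w)=2w$. For $n\ge1$ let $A_n=a_n+a_n^{-1}+b_n+b_n^{-1}+c_n+c_n^{-1}$, where $a_n,b_n,c_n$ are the permutation matrices of $a,b,c$ on $X^n$, let $P_n(\lambda)=\det(\lambda I-A_n)$ and $f(\lambda)=\lambda^2-4\lambda-6$, with $f^{\circ i}$ the $i$-fold iterate ($f^{\circ 0}=\mathrm{id}$). Then for every $n\ge1$ $$P_n(\lambda)=(\lambda-6)\prod_{i=0}^{n-1}\bigl(f^{\circ i}(\lambda)+2\bigr)\prod_{i=0}^{n-1}\bigl(f^{\circ i}(\lambda)-4\bigr)^{2\cdot 4^{\,n-i-1}}.$$ In particular, the spectrum of $A_n$ (as a multiset) is the disjoint union of $\{6\}$, the sets $f^{-i}(-2)$ for $i=0,\dots,n-1$ (each element with multiplicity one), and the sets $f^{-i}(4)$ for $i=0,\dots,n-1$, each element of $f^{-i}(4)$ counted with multiplicity $2\cdot 4^{n-i-1}$.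
   Context: $f^{-i}(x)$ denotes the set of $\lambda\in\mathbb{C}$ with $f^{\circ i}(\lambda)=x$. $A_n$ is the adjacency matrix of the $n$-th Schreier graph of the group generated by $a,b,c$. *)

theory Defs
  imports Complex_Main "HOL-Computational_Algebra.Polynomial" "Jordan_Normal_Form.Char_Poly"
begin

fun ga :: "nat list \<Rightarrow> nat list" where
  "ga [] = []"
| "ga (x # w) = (if x = 0 then 1 # ga w else if x = 1 then 0 # w else x # w)"

fun gb :: "nat list \<Rightarrow> nat list" where
  "gb [] = []"
| "gb (x # w) = (if x = 0 then 2 # gb w else if x = 2 then 0 # w else x # w)"

fun gc :: "nat list \<Rightarrow> nat list" where
  "gc [] = []"
| "gc (x # w) = (if x = 0 then 3 # gc w else if x = 3 then 0 # w else x # w)"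

text \<open>Enumeration of X^n by indices i < 4^n (base-4 digits, first letter = lowest digit).\<close>
definition word :: "nat \<Rightarrow> nat \<Rightarrow> nat list" where
  "word n i = map (\<lambda>k. i div 4 ^ k mod 4) [0..<n]"

text \<open>Permutation matrix of g on X^n: entry (u,v) is 1 iff g v = u; the inverse is its transpose.\<close>
definition perm_mat :: "(nat list \<Rightarrow> nat list) \<Rightarrow> nat \<Rightarrow> complex mat" where
  "perm_mat g n = mat (4 ^ n) (4 ^ n)
     (\<lambda>(i, j). if g (word n j) = word n i then 1 else 0)"

definition Amat :: "nat \<Rightarrow> complex mat" where
  "Amat n = perm_mat ga n + transpose_mat (perm_mat ga n)
          + perm_mat gb n + transpose_mat (perm_mat gb n)
          + perm_mat gc n + transpose_mat (perm_mat gc n)"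

definition ff :: "complex \<Rightarrow> complex" where
  "ff x = x ^ 2 - 4 * x - 6"

definition fpoly :: "complex poly" where
  "fpoly = [:-6, -4, 1:]"

definition fiter :: "nat \<Rightarrow> complex poly" where
  "fiter i = ((\<lambda>p. pcompose fpoly p) ^^ i) [:0, 1:]"

end

theory Submission
  imports Defs
begin


fun idx :: "nat list \<Rightarrow> nat" where
  "idx [] = 0"
| "idx (x # w) = x + 4 * idx w"

definition valid :: "nat \<Rightarrow> nat list \<Rightarrow> bool" where
  "valid m w \<longleftrightarrow> length w = m \<and> (\<forall>x\<in>set w. x < 4)"

lemma word_0[simp]: "word 0 i = []" by (simp add: word_def)

lemma word_Suc: "word (Suc m) i = i mod 4 # word m (i div 4)"
proof -
  have "[0..<Suc m] = 0 # map Suc [0..<m]" by (simp add: map_Suc_upt upt_conv_Cons)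
  moreover have "(\<lambda>k. i div 4 ^ k mod 4) \<circ> Suc = (\<lambda>k. (i div 4) div 4 ^ k mod 4)"
    by (auto simp: div_mult2_eq)
  ultimately show ?thesis by (simp add: word_def)
qed

lemma word_cons: "x < 4 \<Longrightarrow> word (Suc m) (x + 4 * j) = x # word m j"
  by (simp add: word_Suc)

lemma word_cons0: "word (Suc m) (4 * j) = 0 # word m j"
  using word_cons[of 0 m j] by simp

lemma valid_word: "valid m (word m i)"
  by (auto simp: valid_def word_def)

lemma idx_word: "i < 4 ^ m \<Longrightarrow> idx (word m i) = i"
proof (induction m arbitrary: i)
  case 0 then show ?case by simp
next
  case (Suc m)
  have "i div 4 < 4 ^ m" using Suc.prems by (simp add: less_mult_imp_div_less mult.commute)
  then show ?case using Suc.IH by (simp add: word_Suc)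
qed

lemma idx_less: "valid m w \<Longrightarrow> idx w < 4 ^ m"
proof (induction w arbitrary: m)
  case Nil then show ?case by (simp add: valid_def)
next
  case (Cons x w)
  then obtain k where m: "m = Suc k" and v: "valid k w" and x: "x < 4" by (cases m) (auto simp: valid_def)
  have "idx w < 4 ^ k" using Cons.IH v by blast
  hence "idx w + 1 \<le> 4 ^ k" by simp
  hence "4 * (idx w + 1) \<le> 4 * 4 ^ k" by simp
  then show ?case using x m by simp
qed

lemma word_idx: "valid m w \<Longrightarrow> word m (idx w) = w"
proof (induction w arbitrary: m)
  case Nil then show ?case by (simp add: valid_def)
next
  case (Cons x w)
  then obtain k where m: "m = Suc k" and v: "valid k w" and x: "x < 4" by (cases m) (auto simp: valid_def)
  show ?case using Cons.IH[OF v] x m by (simp add: word_cons)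
qed

lemma word_eq_iff: "l < 4 ^ m \<Longrightarrow> valid m v \<Longrightarrow> (word m l = v) \<longleftrightarrow> (l = idx v)"
  using idx_word word_idx by metis

lemma word_inj: "i < 4 ^ m \<Longrightarrow> j < 4 ^ m \<Longrightarrow> (word m i = word m j) \<longleftrightarrow> i = j"
  using idx_word by metis

lemma ga_valid: "valid m w \<Longrightarrow> valid m (ga w)"
  by (induction w arbitrary: m rule: ga.induct) (auto simp: valid_def)
lemma gb_valid: "valid m w \<Longrightarrow> valid m (gb w)"
  by (induction w arbitrary: m rule: gb.induct) (auto simp: valid_def)
lemma gc_valid: "valid m w \<Longrightarrow> valid m (gc w)"
  by (induction w arbitrary: m rule: gc.induct) (auto simp: valid_def)

lemma ga_inj: "ga u = ga v \<Longrightarrow> u = v"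
  by (induction u arbitrary: v rule: ga.induct; case_tac v; auto split: if_splits)
lemma gb_inj: "gb u = gb v \<Longrightarrow> u = v"
  by (induction u arbitrary: v rule: gb.induct; case_tac v; auto split: if_splits)
lemma gc_inj: "gc u = gc v \<Longrightarrow> u = v"
  by (induction u arbitrary: v rule: gc.induct; case_tac v; auto split: if_splits)



lemma ind_mult[simp]: "(if P then 1 else 0) * (x::'a::semiring_1) = (if P then x else 0)" by simp
lemma mult_ind[simp]: "(x::'a::semiring_1) * (if P then 1 else 0) = (if P then x else 0)" by simp

lemma ifz_mult[simp]: "(if P then a else 0) * (x::'a::semiring_0) = (if P then a * x else 0)" by simp
lemma mult_ifz[simp]: "(x::'a::semiring_0) * (if P then a else 0) = (if P then x * a else 0)" by simp
lemma ifz_div[simp]: "(if P then a else 0) / (x::'a::field) = (if P then a / x else 0)" by simp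

lemma schur:
  fixes B1 :: "'a::field mat"
  assumes B1: "B1 \<in> carrier_mat n n" and B2: "B2 \<in> carrier_mat n k" and B3: "B3 \<in> carrier_mat k n"
    and mu: "\<mu> \<noteq> 0"
  shows "det (four_block_mat B1 B2 B3 (\<mu> \<cdot>\<^sub>m 1\<^sub>m k)) = \<mu> ^ k * det (B1 - (1/\<mu>) \<cdot>\<^sub>m (B2 * B3))"
proof -
  let ?M = "four_block_mat B1 B2 B3 (\<mu> \<cdot>\<^sub>m 1\<^sub>m k)"
  let ?U = "four_block_mat (1\<^sub>m n) (0\<^sub>m n k) ((-1/\<mu>) \<cdot>\<^sub>m B3) (1\<^sub>m k)"
  have M: "?M \<in> carrier_mat (n+k) (n+k)" using B1 by auto
  have U: "?U \<in> carrier_mat (n+k) (n+k)" by auto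
  have dU: "det ?U = 1"
    by (subst det_four_block_mat_upper_right_zero[of _ n _ k], insert B3, auto)
  have prod: "?M * ?U = four_block_mat (B1 * 1\<^sub>m n + B2 * ((-1/\<mu>) \<cdot>\<^sub>m B3)) (B1 * 0\<^sub>m n k + B2 * 1\<^sub>m k)
      (B3 * 1\<^sub>m n + (\<mu> \<cdot>\<^sub>m 1\<^sub>m k) * ((-1/\<mu>) \<cdot>\<^sub>m B3)) (B3 * 0\<^sub>m n k + (\<mu> \<cdot>\<^sub>m 1\<^sub>m k) * 1\<^sub>m k)"
    by (rule mult_four_block_mat, insert B1 B2 B3, auto)
  have e1: "B1 * 1\<^sub>m n + B2 * ((-1/\<mu>) \<cdot>\<^sub>m B3) = B1 - (1/\<mu>) \<cdot>\<^sub>m (B2 * B3)"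
    using B1 B2 B3 by (intro eq_matI) (auto simp: scalar_prod_def sum_distrib_left sum_negf algebra_simps)
  have e2: "B1 * 0\<^sub>m n k + B2 * 1\<^sub>m k = B2" using B1 B2 by auto
  have e3: "B3 * 1\<^sub>m n + (\<mu> \<cdot>\<^sub>m 1\<^sub>m k) * ((-1/\<mu>) \<cdot>\<^sub>m B3) = 0\<^sub>m k n"
    using B3 mu by (intro eq_matI) (auto simp: scalar_prod_def sum_negf)
  have e4: "B3 * 0\<^sub>m n k + (\<mu> \<cdot>\<^sub>m 1\<^sub>m k) * 1\<^sub>m k = \<mu> \<cdot>\<^sub>m 1\<^sub>m k" using B3 by auto
  have "det ?M = det ?M * det ?U" using dU by simp
  also have "\<dots> = det (?M * ?U)" by (rule det_mult[OF M U, symmetric])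
  also have "\<dots> = det (four_block_mat (B1 - (1/\<mu>) \<cdot>\<^sub>m (B2 * B3)) B2 (0\<^sub>m k n) (\<mu> \<cdot>\<^sub>m 1\<^sub>m k))"
    unfolding prod e1 e2 e3 e4 ..
  also have "\<dots> = det (B1 - (1/\<mu>) \<cdot>\<^sub>m (B2 * B3)) * det (\<mu> \<cdot>\<^sub>m 1\<^sub>m k)"
    by (rule det_four_block_mat_lower_left_zero, insert B1 B2 B3, auto)
  finally show ?thesis by simp
qed



lemma det_perm_sim:
  fixes A :: "'a::comm_ring_1 mat"
  assumes A: "A \<in> carrier_mat n n" and p: "p permutes {0..<n}"
  shows "det (mat n n (\<lambda>(i,j). A $$ (p i, p j))) = det A"
proof -
  let ?R = "mat n n (\<lambda>(i,j). A $$ (p i, j))"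
  have pn: "i < n \<Longrightarrow> p i < n" for i using p by (meson atLeastLessThan_iff permutes_in_image zero_le)
  have R: "?R \<in> carrier_mat n n" by simp
  have dR: "det ?R = signof p * det A" by (rule det_permute_rows[OF A p])
  have tR: "transpose_mat ?R \<in> carrier_mat n n" by simp
  have d2: "det (mat n n (\<lambda>(i,j). transpose_mat ?R $$ (p i, j))) = signof p * det (transpose_mat ?R)"
    by (rule det_permute_rows[OF tR p])
  have eq: "mat n n (\<lambda>(i,j). transpose_mat ?R $$ (p i, j)) = transpose_mat (mat n n (\<lambda>(i,j). A $$ (p i, p j)))"
    by (rule eq_matI, auto simp: pn)
  have ss: "signof p * signof p = (1::'a)"
    by (cases p rule: sign_cases) simp_all
  have "det (mat n n (\<lambda>(i,j). A $$ (p i, p j))) = det (transpose_mat (mat n n (\<lambda>(i,j). A $$ (p i, p j))))"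
    by (rule det_transpose[symmetric, of _ n], simp)
  also have "\<dots> = signof p * det (transpose_mat ?R)" using d2 eq by simp
  also have "\<dots> = signof p * (signof p * det A)" using det_transpose[OF R] dR by simp
  also have "\<dots> = det A" using ss by (simp add: mult.assoc[symmetric])
  finally show ?thesis .
qed




abbreviation ind :: "bool \<Rightarrow> complex" where "ind P \<equiv> (if P then 1 else 0)"

lemma perm_mat_carrier[simp]: "perm_mat g n \<in> carrier_mat (4^n) (4^n)"
  by (simp add: perm_mat_def)

lemma Amat_carrier[simp]: "Amat n \<in> carrier_mat (4^n) (4^n)"
  unfolding Amat_def by (intro add_carrier_mat; auto simp: perm_mat_def)

lemma Amat_dim[simp]: "dim_row (Amat n) = 4^n" "dim_col (Amat n) = 4^n"
  using Amat_carrier[of n] by (auto simp del: Amat_carrier)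

lemma Amat_entry: "i < 4^n \<Longrightarrow> j < 4^n \<Longrightarrow> Amat n $$ (i,j) =
    (ind (ga (word n j) = word n i) + ind (ga (word n i) = word n j))
  + (ind (gb (word n j) = word n i) + ind (gb (word n i) = word n j))
  + (ind (gc (word n j) = word n i) + ind (gc (word n i) = word n j))"
  by (simp add: Amat_def perm_mat_def)

context
  fixes m :: nat
begin

abbreviation "N \<equiv> (4::nat)^m"
abbreviation "w \<equiv> word m"

lemma winj[simp]: "j < N \<Longrightarrow> l < N \<Longrightarrow> (w l = w j) \<longleftrightarrow> l = j"
  using word_inj by blast

lemma lt4: "x < 4 \<Longrightarrow> j < N \<Longrightarrow> x + 4 * j < 4 ^ Suc m" by simp

lemma E00: "j < N \<Longrightarrow> l < N \<Longrightarrow> Amat (Suc m) $$ (4*j, 4*l) = 0"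
  using lt4[of 0 j] lt4[of 0 l] by (simp add: Amat_entry word_cons0)

definition gen :: "nat \<Rightarrow> nat list \<Rightarrow> nat list" where
  "gen x = (if x = 0 then ga else if x = 1 then gb else gc)"

lemma gen_valid: "valid m v \<Longrightarrow> valid m (gen x v)"
  by (simp add: gen_def ga_valid gb_valid gc_valid)
lemma gen_inj: "gen x u = gen x v \<Longrightarrow> u = v"
  by (auto simp: gen_def dest: ga_inj gb_inj gc_inj split: if_splits)

lemma x3: "x < (3::nat) \<Longrightarrow> x = 0 \<or> x = 1 \<or> x = 2" by auto

lemma entry_cons: "x < 4 \<Longrightarrow> y < 4 \<Longrightarrow> j < N \<Longrightarrow> l < N \<Longrightarrow>
  Amat (Suc m) $$ (x + 4*j, y + 4*l) =
    (ind (ga (y # w l) = x # w j) + ind (ga (x # w j) = y # w l))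
  + (ind (gb (y # w l) = x # w j) + ind (gb (x # w j) = y # w l))
  + (ind (gc (y # w l) = x # w j) + ind (gc (x # w j) = y # w l))"
  using lt4[of x j] lt4[of y l] by (simp only: Amat_entry word_cons)

lemma E0y: "x < 3 \<Longrightarrow> j < N \<Longrightarrow> l < N \<Longrightarrow>
   Amat (Suc m) $$ (4*j, Suc x + 4*l) = ind (l = j) + ind (gen x (w j) = w l)"
  using entry_cons[of 0 "Suc x" j l]
  by (auto dest!: x3 simp: gen_def)

lemma Ey0: "x < 3 \<Longrightarrow> j < N \<Longrightarrow> l < N \<Longrightarrow>
   Amat (Suc m) $$ (Suc x + 4*l, 4*j) = ind (gen x (w j) = w l) + ind (l = j)"
  using entry_cons[of "Suc x" 0 l j]
  by (auto dest!: x3 simp: gen_def)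

lemma Exy: "x < 3 \<Longrightarrow> y < 3 \<Longrightarrow> j < N \<Longrightarrow> l < N \<Longrightarrow>
   Amat (Suc m) $$ (Suc x + 4*j, Suc y + 4*l) = (if x = y \<and> j = l then 4 else 0)"
  using entry_cons[of "Suc x" "Suc y" j l]
  by (auto dest!: x3 simp: gen_def)

definition pp :: "nat \<Rightarrow> nat" where
  "pp k = (if k < 4 * N then k div N + 4 * (k mod N) else k)"

lemma Npos: "N > 0" by simp

lemma pp_lo: "k < N \<Longrightarrow> pp k = 4 * k"
  by (simp add: pp_def)

lemma pp_hi: "N \<le> k \<Longrightarrow> k < 4 * N \<Longrightarrow> pp k = Suc ((k - N) div N) + 4 * ((k - N) mod N)"
proof -
  assume a: "N \<le> k" "k < 4 * N"
  obtain r where r: "k = N + r" using a(1) le_Suc_ex by blast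
  have "k div N = Suc (r div N)" using r by simp
  moreover have "k mod N = r mod N" using r by simp
  ultimately show ?thesis using a r by (simp add: pp_def)
qed

lemma pp_permutes: "pp permutes {0..<4^Suc m}"
proof (rule bij_imp_permutes)
  let ?q = "\<lambda>i. (i mod 4) * N + i div 4"
  show "bij_betw pp {0..<4 ^ Suc m} {0..<4 ^ Suc m}"
  proof (rule bij_betw_byWitness[where f'="?q"])
    show "\<forall>a\<in>{0..<4 ^ Suc m}. ?q (pp a) = a"
    proof
      fix a :: nat assume "a \<in> {0..<4 ^ Suc m}"
      hence a: "a < 4 * N" by simp
      hence d: "a div N < 4" by (simp add: div_less_iff_less_mult mult.commute)
      have "pp a = a div N + 4 * (a mod N)" using a by (simp add: pp_def)
      thus "?q (pp a) = a" using d by (simp add: div_mult_mod_eq)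
    qed
    show "\<forall>a'\<in>{0..<4 ^ Suc m}. pp (?q a') = a'"
    proof
      fix a :: nat assume "a \<in> {0..<4 ^ Suc m}"
      hence a: "a < 4 * N" by simp
      hence d: "a div 4 < N" by (simp add: div_less_iff_less_mult mult.commute)
      have m4: "a mod 4 < 4" by simp
      have lt: "?q a < 4 * N"
      proof -
        have "(a mod 4) * N + a div 4 < (a mod 4) * N + N" using d by simp
        also have "\<dots> = (a mod 4 + 1) * N" by simp
        also have "\<dots> \<le> 4 * N" using m4 by (intro mult_right_mono) auto
        finally show ?thesis .
      qed
      have "?q a div N = a mod 4" using d by simp
      moreover have "?q a mod N = a div 4" using d by simp
      ultimately show "pp (?q a) = a" using lt by (simp add: pp_def)
    qed
    show "pp ` {0..<4 ^ Suc m} \<subseteq> {0..<4 ^ Suc m}"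
    proof
      fix b :: nat assume "b \<in> pp ` {0..<4 ^ Suc m}"
      then obtain a :: nat where a: "a < 4 * N" and b: "b = pp a" by auto
      hence d: "a div N < 4" by (simp add: div_less_iff_less_mult mult.commute)
      have mN: "a mod N < N" by simp
      have "a div N + 4 * (a mod N) < 4 + 4 * (a mod N)" using d by simp
      also have "\<dots> = 4 * (a mod N + 1)" by simp
      also have "\<dots> \<le> 4 * N" using mN by (intro mult_left_mono) (auto simp del: mod_less_divisor)
      finally show "b \<in> {0..<4 ^ Suc m}" using a b by (simp add: pp_def)
    qed
    show "?q ` {0..<4 ^ Suc m} \<subseteq> {0..<4 ^ Suc m}"
    proof
      fix b :: nat assume "b \<in> ?q ` {0..<4 ^ Suc m}"
      then obtain a :: nat where a: "a < 4 * N" and b: "b = ?q a" by auto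
      hence d: "a div 4 < N" by (simp add: div_less_iff_less_mult mult.commute)
      have m4: "a mod 4 < 4" by simp
      have "(a mod 4) * N + a div 4 < (a mod 4) * N + N" using d by simp
      also have "\<dots> = (a mod 4 + 1) * N" by simp
      also have "\<dots> \<le> 4 * N" using m4 by (intro mult_right_mono) auto
      finally show "b \<in> {0..<4 ^ Suc m}" using b by simp
    qed
  qed
  show "\<And>x. x \<notin> {0..<4 ^ Suc m} \<Longrightarrow> pp x = x" by (simp add: pp_def)
qed

lemma pp_lt: "k < 4 ^ Suc m \<Longrightarrow> pp k < 4 ^ Suc m"
  using pp_permutes by (meson atLeastLessThan_iff permutes_in_image zero_le)

lemma pp_inj: "k < 4 ^ Suc m \<Longrightarrow> l < 4 ^ Suc m \<Longrightarrow> (pp k = pp l) \<longleftrightarrow> k = l"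
  using pp_permutes by (metis permutes_inj inj_eq)

lemma K_entry: "a < 4 ^ Suc m \<Longrightarrow> b < 4 ^ Suc m \<Longrightarrow>
  (- char_matrix (Amat (Suc m)) e) $$ (a, b) = (if a = b then e else 0) - Amat (Suc m) $$ (a, b)"
  by (simp add: char_matrix_def del: power_Suc)

definition B2 :: "complex mat" where
  "B2 = mat N (3*N) (\<lambda>(j,k). - Amat (Suc m) $$ (4*j, Suc (k div N) + 4*(k mod N)))"
definition B3 :: "complex mat" where
  "B3 = mat (3*N) N (\<lambda>(k,j). - Amat (Suc m) $$ (Suc (k div N) + 4*(k mod N), 4*j))"

lemma div3: "k < 3 * N \<Longrightarrow> k div N < 3"
  by (simp add: div_less_iff_less_mult mult.commute)

lemma block: "mat (4^Suc m) (4^Suc m) (\<lambda>(i,j). (- char_matrix (Amat (Suc m)) e) $$ (pp i, pp j))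
  = four_block_mat (e \<cdot>\<^sub>m 1\<^sub>m N) B2 B3 ((e-4) \<cdot>\<^sub>m 1\<^sub>m (3*N))"
proof (rule eq_matI)
  show "dim_row (mat (4^Suc m) (4^Suc m) (\<lambda>(i,j). (- char_matrix (Amat (Suc m)) e) $$ (pp i, pp j))) =
    dim_row (four_block_mat (e \<cdot>\<^sub>m 1\<^sub>m N) B2 B3 ((e-4) \<cdot>\<^sub>m 1\<^sub>m (3*N)))" by simp
  show "dim_col (mat (4^Suc m) (4^Suc m) (\<lambda>(i,j). (- char_matrix (Amat (Suc m)) e) $$ (pp i, pp j))) =
    dim_col (four_block_mat (e \<cdot>\<^sub>m 1\<^sub>m N) B2 B3 ((e-4) \<cdot>\<^sub>m 1\<^sub>m (3*N)))" by simp
  fix i j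
  assume "i < dim_row (four_block_mat (e \<cdot>\<^sub>m 1\<^sub>m N) B2 B3 ((e-4) \<cdot>\<^sub>m 1\<^sub>m (3*N)))"
    and "j < dim_col (four_block_mat (e \<cdot>\<^sub>m 1\<^sub>m N) B2 B3 ((e-4) \<cdot>\<^sub>m 1\<^sub>m (3*N)))"
  hence i: "i < 4 * N" and j: "j < 4 * N" by auto
  have i': "i < 4 ^ Suc m" and j': "j < 4 ^ Suc m" using i j by auto
  have lhs: "mat (4^Suc m) (4^Suc m) (\<lambda>(i,j). (- char_matrix (Amat (Suc m)) e) $$ (pp i, pp j)) $$ (i,j)
     = (if i = j then e else 0) - Amat (Suc m) $$ (pp i, pp j)"
    using i' j' pp_lt[OF i'] pp_lt[OF j'] pp_inj[OF i' j'] by (simp add: K_entry del: power_Suc)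
  have rhs: "four_block_mat (e \<cdot>\<^sub>m 1\<^sub>m N) B2 B3 ((e-4) \<cdot>\<^sub>m 1\<^sub>m (3*N)) $$ (i,j) =
     (if i < N then if j < N then (if i = j then e else 0) else B2 $$ (i, j - N)
      else if j < N then B3 $$ (i - N, j) else (if i = j then e - 4 else 0))"
    using i j by auto
  show "mat (4^Suc m) (4^Suc m) (\<lambda>(i,j). (- char_matrix (Amat (Suc m)) e) $$ (pp i, pp j)) $$ (i,j) =
    four_block_mat (e \<cdot>\<^sub>m 1\<^sub>m N) B2 B3 ((e-4) \<cdot>\<^sub>m 1\<^sub>m (3*N)) $$ (i,j)"
    unfolding lhs rhs
  proof (cases "i < N"; cases "j < N")
    assume a: "i < N" "j < N"
    thus "(if i = j then e else 0) - Amat (Suc m) $$ (pp i, pp j) =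
      (if i < N then if j < N then (if i = j then e else 0) else B2 $$ (i, j - N)
      else if j < N then B3 $$ (i - N, j) else (if i = j then e - 4 else 0))"
      by (simp add: pp_lo E00)
  next
    assume a: "i < N" "\<not> j < N"
    have k: "j - N < 3 * N" using j a by simp
    thus "(if i = j then e else 0) - Amat (Suc m) $$ (pp i, pp j) =
      (if i < N then if j < N then (if i = j then e else 0) else B2 $$ (i, j - N)
      else if j < N then B3 $$ (i - N, j) else (if i = j then e - 4 else 0))"
      using a j by (simp add: pp_lo pp_hi B2_def)
  next
    assume a: "\<not> i < N" "j < N"
    have k: "i - N < 3 * N" using i a by simp
    thus "(if i = j then e else 0) - Amat (Suc m) $$ (pp i, pp j) =
      (if i < N then if j < N then (if i = j then e else 0) else B2 $$ (i, j - N)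
      else if j < N then B3 $$ (i - N, j) else (if i = j then e - 4 else 0))"
      using a i by (simp add: pp_lo pp_hi B3_def)
  next
    assume a: "\<not> i < N" "\<not> j < N"
    have ki: "i - N < 3 * N" using i a by simp
    have kj: "j - N < 3 * N" using j a by simp
    have E: "Amat (Suc m) $$ (pp i, pp j) = (if i = j then 4 else 0)"
    proof -
      have pi: "pp i = Suc ((i - N) div N) + 4 * ((i - N) mod N)" using a i by (intro pp_hi) auto
      have pj: "pp j = Suc ((j - N) div N) + 4 * ((j - N) mod N)" using a j by (intro pp_hi) auto
      have "Amat (Suc m) $$ (pp i, pp j) = (if (i - N) div N = (j - N) div N \<and> (i - N) mod N = (j - N) mod N then 4 else 0)"
        unfolding pi pj by (rule Exy[OF div3[OF ki] div3[OF kj]]) simp_all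
      also have "((i - N) div N = (j - N) div N \<and> (i - N) mod N = (j - N) mod N) \<longleftrightarrow> i = j"
        using a by (metis div_mult_mod_eq add_diff_inverse_nat diff_add_inverse)
      finally show ?thesis .
    qed
    show "(if i = j then e else 0) - Amat (Suc m) $$ (pp i, pp j) =
      (if i < N then if j < N then (if i = j then e else 0) else B2 $$ (i, j - N)
      else if j < N then B3 $$ (i - N, j) else (if i = j then e - 4 else 0))"
      using a unfolding E by simp
  qed
qed


lemma delta4: assumes "a < n" "b < n" "j < n" "j' < (n::nat)" shows "
  (\<Sum>l<n. (ind (l = j) + ind (l = a)) * (ind (l = b) + ind (l = j'))) =
   ind (j = b) + ind (j = j') + ind (a = b) + ind (a = j')"
proof -
  have pt: "(ind (l = j) + ind (l = a)) * (ind (l = b) + ind (l = j')) =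
     ind (l = j \<and> j = b) + ind (l = j \<and> j = j') + ind (l = a \<and> a = b) + ind (l = a \<and> a = j')" for l
    by (cases "l = j"; cases "l = a"; cases "l = b"; cases "l = j'"; simp)
  have "(\<Sum>l<n. (ind (l = j) + ind (l = a)) * (ind (l = b) + ind (l = j'))) =
    (\<Sum>l<n. ind (l = j \<and> j = b)) + (\<Sum>l<n. ind (l = j \<and> j = j')) + (\<Sum>l<n. ind (l = a \<and> a = b)) + (\<Sum>l<n. ind (l = a \<and> a = j'))"
    unfolding pt by (simp only: sum.distrib)
  also have "\<dots> = ind (j = b) + ind (j = j') + ind (a = b) + ind (a = j')"
    using assms by (simp add: sum.delta)
  finally show ?thesis .
qed

lemma inner: assumes x: "x < 3" and j: "j < N" and j': "j' < N"
  shows "(\<Sum>l<N. Amat (Suc m) $$ (4*j, Suc x + 4*l) * Amat (Suc m) $$ (Suc x + 4*l, 4*j')) =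
    2 * ind (j = j') + ind (gen x (w j') = w j) + ind (gen x (w j) = w j')"
proof -
  define a where "a = idx (gen x (w j))"
  define b where "b = idx (gen x (w j'))"
  have va: "valid m (gen x (w j))" and vb: "valid m (gen x (w j'))"
    by (simp_all add: gen_valid valid_word)
  have aN: "a < N" and bN: "b < N" unfolding a_def b_def using va vb idx_less by auto
  have ca: "l < N \<Longrightarrow> (gen x (w j) = w l) \<longleftrightarrow> l = a" for l
    using word_eq_iff[of l m "gen x (w j)"] va unfolding a_def by auto
  have cb: "l < N \<Longrightarrow> (gen x (w j') = w l) \<longleftrightarrow> l = b" for l
    using word_eq_iff[of l m "gen x (w j')"] vb unfolding b_def by auto
  have s0: "(\<Sum>l<N. Amat (Suc m) $$ (4*j, Suc x + 4*l) * Amat (Suc m) $$ (Suc x + 4*l, 4*j')) =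
     (\<Sum>l<N. (ind (l = j) + ind (l = a)) * (ind (l = b) + ind (l = j')))"
  proof (rule sum.cong[OF refl])
    fix l assume "l \<in> {..<N}"
    hence l: "l < N" by simp
    show "Amat (Suc m) $$ (4*j, Suc x + 4*l) * Amat (Suc m) $$ (Suc x + 4*l, 4*j') =
      (ind (l = j) + ind (l = a)) * (ind (l = b) + ind (l = j'))"
      unfolding E0y[OF x j l] Ey0[OF x j' l] ca[OF l] cb[OF l] ..
  qed
  have s1: "(\<Sum>l<N. (ind (l = j) + ind (l = a)) * (ind (l = b) + ind (l = j'))) = ind (j = b) + ind (j = j') + ind (a = b) + ind (a = j')"
    by (rule delta4[OF aN bN j j'])
  have e1: "(j = b) \<longleftrightarrow> (gen x (w j') = w j)" using cb[OF j] by simp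
  have e2: "(a = j') \<longleftrightarrow> (gen x (w j) = w j')" using ca[OF j'] by auto
  have e3: "(a = b) \<longleftrightarrow> (j = j')"
  proof
    assume "a = b"
    hence "word m a = word m b" by simp
    hence "gen x (w j) = gen x (w j')" unfolding a_def b_def using word_idx va vb by simp
    hence "w j = w j'" by (rule gen_inj)
    thus "j = j'" using j j' by simp
  qed (simp add: a_def b_def)
  show ?thesis unfolding s0 s1 e1 e2 e3 by simp
qed

lemma split_sum: "(\<Sum>k<a*n. f k) = (\<Sum>x<a. \<Sum>l<n. f (x*n + l))" for f :: "nat \<Rightarrow> 'a::comm_monoid_add"
proof -
  have "(\<Sum>k<a*n. f k) = (\<Sum>x<a. sum f {x*n..<x*n+n})" by (rule sum.nat_group[symmetric])
  also have "\<dots> = (\<Sum>x<a. \<Sum>l<n. f (x*n + l))"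
  proof (rule sum.cong[OF refl])
    fix x
    have "sum f {0 + x*n..<n + x*n} = (\<Sum>l = 0..<n. f (l + x*n))" by (rule sum.shift_bounds_nat_ivl)
    thus "sum f {x*n..<x*n+n} = (\<Sum>l<n. f (x*n + l))" by (simp add: atLeast0LessThan add.commute)
  qed
  finally show ?thesis .
qed

lemma B2_carrier: "B2 \<in> carrier_mat N (3*N)" by (simp add: B2_def)
lemma B3_carrier: "B3 \<in> carrier_mat (3*N) N" by (simp add: B3_def)

lemma B23: "B2 * B3 = 6 \<cdot>\<^sub>m 1\<^sub>m N + Amat m"
proof (rule eq_matI)
  fix j j' assume "j < dim_row (6 \<cdot>\<^sub>m 1\<^sub>m N + Amat m)" "j' < dim_col (6 \<cdot>\<^sub>m 1\<^sub>m N + Amat m)"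
  hence j: "j < N" and j': "j' < N" by auto
  have "(B2 * B3) $$ (j, j') = (\<Sum>k<3*N. Amat (Suc m) $$ (4*j, Suc (k div N) + 4*(k mod N))
                 * Amat (Suc m) $$ (Suc (k div N) + 4*(k mod N), 4*j'))"
    using j j' by (simp add: B2_def B3_def scalar_prod_def lessThan_atLeast0 del: power_Suc)
  also have "\<dots> = (\<Sum>x<3. \<Sum>l<N. Amat (Suc m) $$ (4*j, Suc x + 4*l) * Amat (Suc m) $$ (Suc x + 4*l, 4*j'))"
    unfolding split_sum by (intro sum.cong refl) auto
  also have "\<dots> = (\<Sum>x<3. 2 * ind (j = j') + ind (gen x (w j') = w j) + ind (gen x (w j) = w j'))"
    by (intro sum.cong refl inner[OF _ j j']) auto
  also have "\<dots> = 6 * ind (j = j') + Amat m $$ (j, j')"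
    using j j' by (simp add: Amat_entry numeral_3_eq_3 gen_def)
  also have "\<dots> = (6 \<cdot>\<^sub>m 1\<^sub>m N + Amat m) $$ (j, j')" using j j' by simp
  finally show "(B2 * B3) $$ (j, j') = (6 \<cdot>\<^sub>m 1\<^sub>m N + Amat m) $$ (j, j')" .
qed (simp_all add: B2_def B3_def)

lemma step: assumes e: "e \<noteq> 4"
  shows "poly (char_poly (Amat (Suc m))) e = (e - 4) ^ (2 * N) * poly (char_poly (Amat m)) (ff e)"
proof -
  let ?A = "Amat (Suc m)"
  let ?K = "- char_matrix ?A e"
  define \<mu> where "\<mu> = e - 4"
  have mu: "\<mu> \<noteq> 0" using e by (simp add: \<mu>_def)
  have K: "?K \<in> carrier_mat (4^Suc m) (4^Suc m)" by (simp del: power_Suc)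
  have "poly (char_poly ?A) e = det ?K" by (rule char_poly_matrix[OF Amat_carrier])
  also have "\<dots> = det (mat (4^Suc m) (4^Suc m) (\<lambda>(i,j). ?K $$ (pp i, pp j)))"
    by (rule det_perm_sim[OF K pp_permutes, symmetric])
  also have "\<dots> = det (four_block_mat (e \<cdot>\<^sub>m 1\<^sub>m N) B2 B3 (\<mu> \<cdot>\<^sub>m 1\<^sub>m (3*N)))"
    unfolding block \<mu>_def ..
  also have "\<dots> = \<mu> ^ (3*N) * det (e \<cdot>\<^sub>m 1\<^sub>m N - (1/\<mu>) \<cdot>\<^sub>m (B2 * B3))"
    by (rule schur[OF _ B2_carrier B3_carrier mu]) simp
  finally have 1: "poly (char_poly ?A) e = \<mu> ^ (3*N) * det (e \<cdot>\<^sub>m 1\<^sub>m N - (1/\<mu>) \<cdot>\<^sub>m (6 \<cdot>\<^sub>m 1\<^sub>m N + Amat m))"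
    unfolding B23 .
  define S where "S = e \<cdot>\<^sub>m 1\<^sub>m N - (1/\<mu>) \<cdot>\<^sub>m (6 \<cdot>\<^sub>m 1\<^sub>m N + Amat m)"
  have S: "S \<in> carrier_mat N N" unfolding S_def by (intro minus_carrier_mat smult_carrier_mat add_carrier_mat one_carrier_mat Amat_carrier)
  have muS: "\<mu> \<cdot>\<^sub>m S = - char_matrix (Amat m) (ff e)"
  proof (rule eq_matI)
    fix i j assume "i < dim_row (- char_matrix (Amat m) (ff e))" "j < dim_col (- char_matrix (Amat m) (ff e))"
    hence i: "i < N" and j: "j < N" by (auto simp: char_matrix_def)
    show "(\<mu> \<cdot>\<^sub>m S) $$ (i, j) = (- char_matrix (Amat m) (ff e)) $$ (i, j)"
      using i j mu by (simp add: S_def char_matrix_def ff_def \<mu>_def field_simps power2_eq_square)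
  qed (auto simp: S_def char_matrix_def)
  have "poly (char_poly (Amat m)) (ff e) = det (- char_matrix (Amat m) (ff e))"
    by (rule char_poly_matrix[OF Amat_carrier])
  also have "\<dots> = \<mu> ^ N * det S" unfolding muS[symmetric] using S by simp
  finally have 2: "poly (char_poly (Amat m)) (ff e) = \<mu> ^ N * det S" .
  have "poly (char_poly ?A) e = \<mu> ^ (2*N) * (\<mu> ^ N * det S)"
    unfolding 1 S_def[symmetric] by (simp add: power_add[symmetric] mult.assoc[symmetric])
  thus ?thesis unfolding 2 \<mu>_def .
qed

end


lemma poly_fpoly[simp]: "poly fpoly x = ff x"
  by (simp add: fpoly_def ff_def power2_eq_square algebra_simps)

lemma char_rec: "char_poly (Amat (Suc m)) = [:-4,1:] ^ (2 * 4 ^ m) * pcompose (char_poly (Amat m)) fpoly"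
proof -
  let ?D = "char_poly (Amat (Suc m)) - [:-4,1:] ^ (2 * 4 ^ m) * pcompose (char_poly (Amat m)) fpoly"
  have z: "poly ?D e = 0" if "e \<noteq> 4" for e
    using step[OF that, of m] by (simp add: poly_pcompose)
  have "?D = 0"
  proof (rule ccontr)
    assume "?D \<noteq> 0"
    hence "finite {e. poly ?D e = 0}" by (rule poly_roots_finite)
    moreover have "UNIV - {4} \<subseteq> {e. poly ?D e = 0}" using z by auto
    ultimately have "finite (UNIV - {4::complex})" by (rule finite_subset[rotated])
    hence "finite (UNIV :: complex set)" by simp
    thus False by (simp add: infinite_UNIV_char_0)
  qed
  thus ?thesis by simp
qed

lemma char0: "char_poly (Amat 0) = [:-6,1:]"
proof -
  have ut: "upper_triangular (Amat 0)" by (auto simp: upper_triangular_def)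
  have d: "diag_mat (Amat 0) = [6]"
    by (simp add: diag_mat_def Amat_entry)
  show ?thesis
    using char_poly_upper_triangular[OF Amat_carrier ut] d by simp
qed

lemma fiter_0[simp]: "fiter 0 = [:0,1:]" by (simp add: fiter_def)
lemma fiter_Suc: "fiter (Suc i) = pcompose fpoly (fiter i)" by (simp add: fiter_def)

lemma funpow_pcompose: "pcompose (((\<lambda>p. pcompose fpoly p) ^^ i) p) q = ((\<lambda>p. pcompose fpoly p) ^^ i) (pcompose p q)"
  by (induction i) (simp_all add: pcompose_assoc[symmetric])

lemma fiter_comp: "pcompose (fiter i) fpoly = fiter (Suc i)"
proof -
  have "pcompose (fiter i) fpoly = ((\<lambda>p. pcompose fpoly p) ^^ i) (pcompose [:0,1:] fpoly)"
    unfolding fiter_def by (rule funpow_pcompose)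
  also have "pcompose [:0,1:] fpoly = pcompose fpoly [:0,1:]" by (simp add: pcompose_pCons)
  also have "((\<lambda>p. pcompose fpoly p) ^^ i) (pcompose fpoly [:0,1:]) = fiter (Suc i)"
    unfolding fiter_def by (simp only: funpow_Suc_right o_apply)
  finally show ?thesis .
qed

lemma poly_fiter: "poly (fiter i) x = (ff ^^ i) x"
  by (induction i) (simp_all add: fiter_Suc poly_pcompose)

lemma pcompose_pow: "pcompose (p ^ k) q = (pcompose p q) ^ k"
  by (induction k) (simp_all add: pcompose_mult pcompose_1)

lemma closed: "char_poly (Amat n) =
           [:-6, 1:] * (\<Prod>i<n. fiter i + [:2:])
             * (\<Prod>i<n. (fiter i - [:4:]) ^ (2 * 4 ^ (n - i - 1)))"
proof (induction n)
  case 0 then show ?case by (simp add: char0)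
next
  case (Suc n)
  have c6: "pcompose [:-6, 1:] fpoly = [:-6,1:] * [:2,1:]"
    by (simp add: fpoly_def pcompose_pCons)
  have p1: "pcompose (\<Prod>i<n. fiter i + [:2:]) fpoly = (\<Prod>i<n. fiter (Suc i) + [:2:])"
    by (simp add: pcompose_prod pcompose_add fiter_comp)
  have p2: "pcompose (\<Prod>i<n. (fiter i - [:4:]) ^ (2 * 4 ^ (n - i - 1))) fpoly
      = (\<Prod>i<n. (fiter (Suc i) - [:4:]) ^ (2 * 4 ^ (Suc n - Suc i - 1)))"
    by (simp add: pcompose_prod pcompose_diff pcompose_pow fiter_comp)
  have q1: "(\<Prod>i<Suc n. fiter i + [:2:]) = [:2,1:] * (\<Prod>i<n. fiter (Suc i) + [:2:])"
    by (subst prod.lessThan_Suc_shift) simp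
  have q2: "(\<Prod>i<Suc n. (fiter i - [:4:]) ^ (2 * 4 ^ (Suc n - i - 1))) =
      [:-4,1:] ^ (2 * 4 ^ n) * (\<Prod>i<n. (fiter (Suc i) - [:4:]) ^ (2 * 4 ^ (Suc n - Suc i - 1)))"
    by (subst prod.lessThan_Suc_shift) simp
  show ?case
    unfolding char_rec Suc.IH pcompose_mult c6 p1 p2 q1 q2 by (simp only: mult_ac)
qed

lemma degree_fiter: "degree (fiter i) = 2 ^ i"
proof (induction i)
  case 0 then show ?case by simp
next
  case (Suc i)
  have "degree fpoly = 2" by (simp add: fpoly_def)
  then show ?case using Suc by (simp add: fiter_Suc degree_pcompose)
qed

lemma fiter_plus_nz: "fiter i + [:c:] \<noteq> 0"
proof -
  have "degree (fiter i + [:c:]) = degree (fiter i)"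
    by (rule degree_add_eq_left) (simp add: degree_fiter)
  thus ?thesis using degree_fiter[of i] by (metis degree_0 power_not_zero zero_neq_numeral)
qed

lemma fiter_minus_nz: "fiter i - [:c:] \<noteq> 0"
  using fiter_plus_nz[of i "-c"] by (simp add: diff_conv_add_uminus)

lemma order_prod: "finite I \<Longrightarrow> (\<forall>i\<in>I. f i \<noteq> 0) \<Longrightarrow> order a (\<Prod>i\<in>I. f i) = (\<Sum>i\<in>I. order a (f i))"
  for f :: "nat \<Rightarrow> complex poly"
proof (induction I rule: finite_induct)
  case empty then show ?case by (simp add: order_0I)
next
  case (insert x F)
  have "f x * prod f F \<noteq> 0" using insert by simp
  then show ?case using insert by (simp add: order_mult)
qed

lemma order_pow: "p \<noteq> 0 \<Longrightarrow> order a (p ^ k) = k * order a (p :: complex poly)"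
  by (induction k) (simp_all add: order_mult order_0I)

lemma ff_real: "ff (complex_of_real r) = complex_of_real (r^2 - 4*r - 6)"
  by (simp add: ff_def)

lemma orbit10: "\<exists>r::real. (ff ^^ j) (-10) = complex_of_real r \<and> (r = -10 \<or> r \<ge> 7)"
proof (induction j)
  case 0 then show ?case by (intro exI[of _ "-10"]) simp
next
  case (Suc j)
  then obtain r where r: "(ff ^^ j) (-10) = complex_of_real r" "r = -10 \<or> r \<ge> 7" by blast
  have "r^2 - 4*r - 6 \<ge> 7"
  proof (cases "r = -10")
    case True then show ?thesis by simp
  next
    case False
    hence "r \<ge> 7" using r by simp
    hence "(r - 7) * (r + 3) \<ge> 0" by simp
    thus ?thesis by (simp add: power2_eq_square algebra_simps)
  qed
  then show ?case using r by (intro exI[of _ "r^2 - 4*r - 6"]) (simp add: ff_real)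
qed

lemma no_crit: assumes "(ff ^^ i) \<mu> = -2 \<or> (ff ^^ i) \<mu> = 4" and "k < i"
  shows "(ff ^^ k) \<mu> \<noteq> 2"
proof
  assume k: "(ff ^^ k) \<mu> = 2"
  have "i = (i - Suc k) + Suc k" using assms(2) by simp
  hence "(ff ^^ i) \<mu> = (ff ^^ (i - Suc k)) ((ff ^^ Suc k) \<mu>)" by (metis funpow_add o_apply)
  also have "(ff ^^ Suc k) \<mu> = -10" using k by (simp add: ff_def)
  finally have e: "(ff ^^ i) \<mu> = (ff ^^ (i - Suc k)) (-10)" .
  obtain r where r: "(ff ^^ (i - Suc k)) (-10) = complex_of_real r" "r = -10 \<or> r \<ge> 7"
    using orbit10 by blast
  have "complex_of_real r = -2 \<or> complex_of_real r = 4" using assms(1) e r(1) by simp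
  hence "r = -2 \<or> r = 4" by (metis of_real_eq_iff of_real_minus of_real_numeral)
  thus False using r(2) by auto
qed

lemma deriv_nz: "(\<forall>k<i. (ff ^^ k) \<mu> \<noteq> 2) \<Longrightarrow> poly (pderiv (fiter i)) \<mu> \<noteq> 0"
proof (induction i)
  case 0 then show ?case by (simp add: pderiv_pCons)
next
  case (Suc i)
  have pf: "pderiv fpoly = [:-4, 2:]" by (simp add: fpoly_def pderiv_pCons)
  have "poly (pderiv (fiter (Suc i))) \<mu> = (-4 + 2 * (ff ^^ i) \<mu>) * poly (pderiv (fiter i)) \<mu>"
    by (simp add: fiter_Suc pderiv_pcompose poly_pcompose pf poly_fiter)
  moreover have "-4 + 2 * (ff ^^ i) \<mu> \<noteq> 0" using Suc.prems by auto
  ultimately show ?case using Suc by simp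
qed

lemma order_simple: assumes "p \<noteq> 0" "poly p a = 0" "poly (pderiv p) a \<noteq> 0"
  shows "order a (p :: complex poly) = 1"
  using order_pderiv[OF assms(1,2)] order_0I[OF assms(3)] by simp

lemma order_f2: "order \<mu> (fiter i + [:2:]) = (if (ff ^^ i) \<mu> = -2 then 1 else 0)"
proof (cases "(ff ^^ i) \<mu> = -2")
  case True
  have "poly (pderiv (fiter i + [:2:])) \<mu> \<noteq> 0"
    using deriv_nz[of i \<mu>] no_crit[of i \<mu>] True by (simp add: pderiv_add)
  then show ?thesis using True order_simple[OF fiter_plus_nz] by (simp add: poly_fiter)
next
  case False
  have "(ff ^^ i) \<mu> + 2 \<noteq> 0"
  proof
    assume "(ff ^^ i) \<mu> + 2 = 0"
    hence "(ff ^^ i) \<mu> = -2" by (simp add: eq_neg_iff_add_eq_0)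
    thus False using False by simp
  qed
  hence "order \<mu> (fiter i + [:2:]) = 0" by (intro order_0I) (simp add: poly_fiter)
  then show ?thesis using False by simp
qed

lemma order_f4: "order \<mu> (fiter i - [:4:]) = (if (ff ^^ i) \<mu> = 4 then 1 else 0)"
proof (cases "(ff ^^ i) \<mu> = 4")
  case True
  have "poly (pderiv (fiter i - [:4:])) \<mu> \<noteq> 0"
    using deriv_nz[of i \<mu>] no_crit[of i \<mu>] True by (simp add: pderiv_diff)
  then show ?thesis using True order_simple[OF fiter_minus_nz] by (simp add: poly_fiter)
next
  case False
  hence "order \<mu> (fiter i - [:4:]) = 0" by (intro order_0I) (simp add: poly_fiter)
  then show ?thesis using False by simp
qed

lemma order_lin6: "order \<mu> [:-6, 1:] = (if \<mu> = 6 then 1 else (0::nat))"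
proof (cases "\<mu> = 6")
  case True then show ?thesis using order_power_n_n[of "6::complex" 1] by simp
next
  case False
  hence "order \<mu> [:-6, 1:] = 0" by (intro order_0I) simp
  then show ?thesis using False by simp
qed

lemma set_filter_eq: "{i. i < n \<and> P i} = {i \<in> {..<n}. P i}" by auto

theorem theorem3p4:
  fixes n :: nat
  assumes "n \<ge> 1"
  shows "char_poly (Amat n) =
           [:-6, 1:] * (\<Prod>i<n. fiter i + [:2:])
             * (\<Prod>i<n. (fiter i - [:4:]) ^ (2 * 4 ^ (n - i - 1)))
         \<and> (\<forall>\<mu>::complex. order \<mu> (char_poly (Amat n)) =
           (if \<mu> = 6 then 1 else 0)
           + card {i. i < n \<and> (ff ^^ i) \<mu> = -2}
           + (\<Sum>i\<in>{i. i < n \<and> (ff ^^ i) \<mu> = 4}. 2 * 4 ^ (n - i - 1)))"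
proof (intro conjI allI)
  show C: "char_poly (Amat n) =
           [:-6, 1:] * (\<Prod>i<n. fiter i + [:2:])
             * (\<Prod>i<n. (fiter i - [:4:]) ^ (2 * 4 ^ (n - i - 1)))" by (rule closed)
  fix \<mu> :: complex
  have n1: "(\<Prod>i<n. fiter i + [:2:]) \<noteq> 0" using fiter_plus_nz by simp
  have n2: "(\<Prod>i<n. (fiter i - [:4:]) ^ (2 * 4 ^ (n - i - 1))) \<noteq> 0" using fiter_minus_nz by simp
  have n0: "[:-6, 1::complex:] \<noteq> 0" by simp
  have o1: "order \<mu> (\<Prod>i<n. fiter i + [:2:]) = card {i. i < n \<and> (ff ^^ i) \<mu> = -2}"
  proof -
    have "order \<mu> (\<Prod>i<n. fiter i + [:2:]) = (\<Sum>i<n. if (ff ^^ i) \<mu> = -2 then 1 else 0)"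
      by (subst order_prod) (simp_all add: fiter_plus_nz order_f2)
    also have "\<dots> = card {i. i < n \<and> (ff ^^ i) \<mu> = -2}"
      unfolding set_filter_eq by (simp add: sum.inter_filter[symmetric])
    finally show ?thesis .
  qed
  have o2: "order \<mu> (\<Prod>i<n. (fiter i - [:4:]) ^ (2 * 4 ^ (n - i - 1))) =
      (\<Sum>i\<in>{i. i < n \<and> (ff ^^ i) \<mu> = 4}. 2 * 4 ^ (n - i - 1))"
  proof -
    have "order \<mu> (\<Prod>i<n. (fiter i - [:4:]) ^ (2 * 4 ^ (n - i - 1))) =
       (\<Sum>i<n. if (ff ^^ i) \<mu> = 4 then 2 * 4 ^ (n - i - 1) else 0)"
    proof -
      have nz: "\<forall>i\<in>{..<n}. (fiter i - [:4:]) ^ (2 * 4 ^ (n - i - 1)) \<noteq> 0"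
        using fiter_minus_nz by (simp del: power_eq_0_iff add: power_not_zero)
      show ?thesis unfolding order_prod[OF finite_lessThan nz]
        by (intro sum.cong refl) (simp add: order_pow[OF fiter_minus_nz] order_f4)
    qed
    also have "\<dots> = (\<Sum>i\<in>{i. i < n \<and> (ff ^^ i) \<mu> = 4}. 2 * 4 ^ (n - i - 1))"
      by (simp only: set_filter_eq sum.inter_filter[OF finite_lessThan])
    finally show ?thesis .
  qed
  show "order \<mu> (char_poly (Amat n)) =
           (if \<mu> = 6 then 1 else 0)
           + card {i. i < n \<and> (ff ^^ i) \<mu> = -2}
           + (\<Sum>i\<in>{i. i < n \<and> (ff ^^ i) \<mu> = 4}. 2 * 4 ^ (n - i - 1))"
  proof -
    have p01: "[:-6, 1:] * (\<Prod>i<n. fiter i + [:2:]) \<noteq> 0" using n0 n1 by (rule no_zero_divisors)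
    have p012: "[:-6, 1:] * (\<Prod>i<n. fiter i + [:2:]) * (\<Prod>i<n. (fiter i - [:4:]) ^ (2 * 4 ^ (n - i - 1))) \<noteq> 0"
      using p01 n2 by (rule no_zero_divisors)
    have "order \<mu> (char_poly (Amat n)) = order \<mu> ([:-6, 1:] * (\<Prod>i<n. fiter i + [:2:])) + order \<mu> (\<Prod>i<n. (fiter i - [:4:]) ^ (2 * 4 ^ (n - i - 1)))"
      unfolding C by (rule order_mult[OF p012])
    also have "order \<mu> ([:-6, 1:] * (\<Prod>i<n. fiter i + [:2:])) = order \<mu> [:-6, 1:] + order \<mu> (\<Prod>i<n. fiter i + [:2:])"
      by (rule order_mult[OF p01])
    finally show ?thesis unfolding o1 o2 order_lin6 .
  qed
qed

end
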